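(* Let $\mathcal X$ be the Hawaiian earring with base point $0$. For a loop $h:[0,1]\to\mathcal X$ with $h(0)=h(1)=0$ and $n\in\mathbb N$, let $h^{\{n\}}:[0,1]\to C_n$ be defined by $h^{\{n\}}(x)=h(x)$ if $h(x)\in C_n$ and $h^{\{n\}}(x)=0$ otherwise, and let $A(h)=\{n\in\mathbb N: h^{\{n\}}:[0,1]\to C_n\text{ is not null-homotopic}\}$. Then: (i) if two such loops $f,g$ are homotopic (rel endpoints) in $\mathcal X$, then $A(f)=A(g)$; (ii) $|h^{-1}(0)|\ge|A(h)|$; (iii) if $[f]\in\mathfrak P^\omega(\mathcal X,0)$ then $A(f)$ is finite.
   Context: For $n\in\mathbb N=\{1,2,\dots\}$, $C_n=\{(x,y)\in\mathbb R^2: x^2+(y-\tfrac1n)^2=\tfrac1{n^2}\}$ and the Hawaiian earring is $\mathcal X=\bigcup_{n\in\mathbb N}C_n\subseteq\mathbb R^2$; all $C_n$ pass through $0$. An $\omega$-loop at $0$ is a continuous $k:[0,1]\to\mathcal X$ with $k(0)=k(1)=0$ and $|k^{-1}(x)|$ finite for every $x\in\mathcal X$; $\mathfrak P^\omega(\mathcal X,0)$ is the subgroup of $\pi_1(\mathcal X,0)$ generated by homotopy classes (rel endpoints) of $\omega$-loops at $0$ (it coincides with the set of such classes). *)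

theory Defs
  imports "HOL-Analysis.Analysis"
begin

definition Circ :: "nat \<Rightarrow> (real \<times> real) set" where
  "Circ n = {(x, y). x\<^sup>2 + (y - 1 / real n)\<^sup>2 = 1 / (real n)\<^sup>2}"

definition HE :: "(real \<times> real) set" where
  "HE = (\<Union>n\<in>{1..}. Circ n)"

definition HE_loop :: "(real \<Rightarrow> real \<times> real) \<Rightarrow> bool" where
  "HE_loop h \<longleftrightarrow> path h \<and> path_image h \<subseteq> HE \<and> pathstart h = 0 \<and> pathfinish h = 0"

definition restr :: "nat \<Rightarrow> (real \<Rightarrow> real \<times> real) \<Rightarrow> (real \<Rightarrow> real \<times> real)" where
  "restr n h = (\<lambda>x. if h x \<in> Circ n then h x else 0)"

definition Aset :: "(real \<Rightarrow> real \<times> real) \<Rightarrow> nat set" where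
  "Aset h = {n. n \<ge> 1 \<and> \<not> homotopic_paths (Circ n) (restr n h) (linepath 0 0)}"

definition omega_loop :: "(real \<Rightarrow> real \<times> real) \<Rightarrow> bool" where
  "omega_loop k \<longleftrightarrow> HE_loop k \<and> (\<forall>x\<in>HE. finite {t\<in>{0..1}. k t = x})"

text \<open>Loops whose homotopy class lies in the subgroup of pi_1(HE,0) generated by
  classes of omega-loops: closed under identity, products, inverses and homotopy.\<close>
inductive_set Pomega :: "(real \<Rightarrow> real \<times> real) set" where
  gen: "omega_loop k \<Longrightarrow> k \<in> Pomega"
| unit: "linepath 0 0 \<in> Pomega"
| join: "p \<in> Pomega \<Longrightarrow> q \<in> Pomega \<Longrightarrow> p +++ q \<in> Pomega"
| rev: "p \<in> Pomega \<Longrightarrow> reversepath p \<in> Pomega"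
| htpy: "p \<in> Pomega \<Longrightarrow> homotopic_paths HE p q \<Longrightarrow> q \<in> Pomega"

end

theory Submission
  imports Defs
begin

definition qf :: "real \<times> real \<Rightarrow> real" where
  "qf p = (fst p ^ 2 + snd p ^ 2) / (2 * snd p)"

definition rr :: "nat \<Rightarrow> real \<times> real \<Rightarrow> real \<times> real" where
  "rr n p = (if p \<in> Circ n then p else 0)"

lemma circ_eq:
  assumes "m \<ge> 1"
  shows "p \<in> Circ m \<longleftrightarrow> fst p ^ 2 + snd p ^ 2 = 2 * snd p / real m"
proof -
  obtain x y where p: "p = (x, y)" by fastforce
  have "real m > 0" using assms by simp
  have "(y - 1 / real m)^2 = y^2 - 2 * y / real m + 1 / (real m)^2"
    by (simp add: power2_diff power_divide)
  then show ?thesis unfolding p Circ_def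
    by auto
qed

lemma zero_circ[simp]: "0 \<in> Circ m"
  by (simp add: Circ_def zero_prod_def power_divide)

lemma zero_HE[simp]: "0 \<in> HE"
  unfolding HE_def by (rule UN_I[of 1]) auto

lemma HE_E: assumes "p \<in> HE" obtains m where "m \<ge> 1" "p \<in> Circ m"
  using assms unfolding HE_def by auto

lemma circ_pos:
  assumes "m \<ge> 1" "p \<in> Circ m" "p \<noteq> 0"
  shows "snd p > 0"
proof -
  have e: "fst p ^ 2 + snd p ^ 2 = 2 * snd p / real m" using circ_eq assms by blast
  have "fst p \<noteq> 0 \<or> snd p \<noteq> 0" using assms(3) by (metis prod_eq_iff fst_zero snd_zero)
  then have "fst p ^ 2 + snd p ^ 2 > 0"
    by (metis add_nonneg_pos add_pos_nonneg zero_le_power2 zero_less_power2)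
  with e have "2 * snd p / real m > 0" by simp
  moreover have "real m > 0" using assms by simp
  ultimately show ?thesis by (simp add: zero_less_divide_iff)
qed

lemma circ_q:
  assumes "m \<ge> 1" "p \<in> Circ m" "p \<noteq> 0"
  shows "qf p = 1 / real m"
proof -
  have e: "fst p ^ 2 + snd p ^ 2 = 2 * snd p / real m" using circ_eq assms by blast
  have "snd p > 0" using circ_pos assms by blast
  then show ?thesis unfolding qf_def e using assms(1) by (simp add: field_simps)
qed

lemma circ0: "p \<in> Circ 0 \<Longrightarrow> p = 0"
  by (cases p) (auto simp: Circ_def zero_prod_def)

lemma circ_unique':
  assumes "m \<ge> 1" "p \<in> Circ m" "p \<in> Circ m'" "p \<noteq> 0"
  shows "m = m'"
proof (cases "m' = 0")
  case True then show ?thesis using circ0 assms by blast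
next
  case False
  then show ?thesis using circ_q[OF assms(1,2,4)] circ_q[of m' p] assms by simp
qed

lemma circ_unique:
  assumes "m \<ge> 1" "m' \<ge> 1" "p \<in> Circ m" "p \<in> Circ m'" "p \<noteq> 0"
  shows "m = m'"
  using circ_q[OF assms(1,3,5)] circ_q[OF assms(2,4,5)] by simp

lemma gap:
  assumes "m \<ge> 1" "m' \<ge> 1" "\<bar>1 / real m' - 1 / real m\<bar> < 1 / (real m * (real m + 1))"
  shows "m' = m"
proof (rule ccontr)
  assume ne: "m' \<noteq> m"
  have mp: "real m \<ge> 1" "real m' \<ge> 1" using assms by auto
  show False
  proof (cases "m' > m")
    case True
    then have "real m' \<ge> real m + 1" by simp
    then have "1 / real m' \<le> 1 / (real m + 1)" using mp by (simp add: frac_le)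
    moreover have "1 / real m - 1 / (real m + 1) = 1 / (real m * (real m + 1))"
      using mp by (simp add: field_simps)
    ultimately show False using assms(3) by (simp add: abs_if split: if_splits)
  next
    case False
    then have "m' < m" using ne by simp
    then have "real m' \<le> real m - 1" by simp
    then have "1 / real m' \<ge> 1 / (real m - 1)" using mp ne \<open>m' < m\<close>
      by (intro frac_le) auto
    moreover have m2: "real m \<ge> 2" using \<open>m' < m\<close> assms by simp
    then have "1 / (real m - 1) - 1 / real m = 1 / ((real m - 1) * real m)"
      by (simp add: field_simps)
    moreover have "1 / ((real m - 1) * real m) \<ge> 1 / (real m * (real m + 1))"
      using m2 by (intro frac_le) (auto simp: mult_pos_pos)
    ultimately have "1 / (real m - 1) - 1 / real m \<ge> 1 / (real m * (real m + 1))" by simp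
    with \<open>1 / real m' \<ge> 1 / (real m - 1)\<close> show False using assms(3) by (simp add: abs_if split: if_splits)
  qed
qed

lemma qf_cont: "snd p \<noteq> 0 \<Longrightarrow> isCont qf p"
  unfolding qf_def by (intro continuous_intros) auto

lemma local_circ:
  assumes "m \<ge> 1" "p \<in> Circ m" "p \<noteq> 0"
  shows "\<exists>d>0. \<forall>p'\<in>HE. dist p' p < d \<longrightarrow> p' \<noteq> 0 \<and> p' \<in> Circ m"
proof -
  have sp: "snd p > 0" using circ_pos assms by blast
  have qp: "qf p = 1 / real m" using circ_q assms by blast
  define g where "g = 1 / (real m * (real m + 1))"
  have g: "g > 0" using assms(1) unfolding g_def by simp
  obtain d1 where d1: "d1 > 0" "\<And>p'. dist p' p < d1 \<Longrightarrow> dist (qf p') (qf p) < g"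
  proof -
    have "isCont qf p" using qf_cont sp by simp
    then obtain d where "d > 0" "\<forall>p'. dist p' p < d \<longrightarrow> dist (qf p') (qf p) < g"
      unfolding continuous_at_eps_delta using g by blast
    then show ?thesis using that by blast
  qed
  show ?thesis
  proof (intro exI[of _ "min d1 (snd p)"] conjI ballI impI)
    show "min d1 (snd p) > 0" using d1 sp by simp
    fix p' assume p': "p' \<in> HE" "dist p' p < min d1 (snd p)"
    have "dist (snd p') (snd p) < snd p" using dist_snd_le[of p' p] p' by simp
    then have "snd p' > 0" by (simp add: dist_real_def)
    then show nz: "p' \<noteq> 0" by auto
    obtain m' where m': "m' \<ge> 1" "p' \<in> Circ m'" using p'(1) HE_E by blast
    have "dist (qf p') (qf p) < g" using d1 p' by simp
    then have "\<bar>1 / real m' - 1 / real m\<bar> < g"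
      using circ_q[OF m' nz] qp by (simp add: dist_real_def)
    then have "m' = m" using gap[OF assms(1) m'(1)] unfolding g_def by blast
    then show "p' \<in> Circ m" using m' by simp
  qed
qed

lemma rr_cont: "continuous_on HE (rr n)"
  unfolding continuous_on_iff
proof (intro ballI allI impI)
  fix x e assume x: "x \<in> HE" and e: "(e::real) > 0"
  show "\<exists>d>0. \<forall>x'\<in>HE. dist x' x < d \<longrightarrow> dist (rr n x') (rr n x) < e"
  proof (cases "x = 0")
    case True
    show ?thesis
      by (rule exI[of _ e]) (auto simp: e True rr_def dist_norm)
  next
    case False
    obtain m where m: "m \<ge> 1" "x \<in> Circ m" using x HE_E by blast
    obtain d where d: "d > 0" "\<And>p'. p' \<in> HE \<Longrightarrow> dist p' x < d \<Longrightarrow> p' \<noteq> 0 \<and> p' \<in> Circ m"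
      using local_circ[OF m False] by blast
    show ?thesis
    proof (intro exI[of _ "min d e"] conjI ballI impI)
      show "min d e > 0" using d e by simp
      fix x' assume x': "x' \<in> HE" "dist x' x < min d e"
      then have x'c: "x' \<noteq> 0" "x' \<in> Circ m" using d by auto
      show "dist (rr n x') (rr n x) < e"
      proof (cases "m = n")
        case True
        then show ?thesis using x' x'c m by (simp add: rr_def)
      next
        case False
        have "x \<notin> Circ n" using circ_unique'[of m x n] m \<open>x \<noteq> 0\<close> False by blast
        moreover have "x' \<notin> Circ n" using circ_unique'[of m x' n] m x'c False by blast
        ultimately show ?thesis using e by (simp add: rr_def)
      qed
    qed
  qed
qed

lemma restr_rr: "restr n h = rr n \<circ> h"
  by (auto simp: restr_def rr_def)

lemma partI:
  assumes "homotopic_paths HE f g"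
  shows "Aset f = Aset g"
proof -
  have "homotopic_paths (Circ n) (restr n f) (restr n g)" for n
    unfolding restr_rr
    by (rule homotopic_paths_continuous_image[OF assms rr_cont]) (auto simp: rr_def)
  then have "homotopic_paths (Circ n) (restr n f) (linepath 0 0) \<longleftrightarrow>
      homotopic_paths (Circ n) (restr n g) (linepath 0 0)" for n
    by (meson homotopic_paths_trans homotopic_paths_sym)
  then show ?thesis unfolding Aset_def by simp
qed

definition Vset :: "(real \<Rightarrow> real \<times> real) \<Rightarrow> nat set" where
  "Vset h = {n. n \<ge> 1 \<and> (\<exists>t\<in>{0..1}. h t \<in> Circ n \<and> h t \<noteq> 0)}"

lemma stay:
  assumes hl: "HE_loop h" and n: "n \<ge> 1" and t: "t \<in> {0..1}" "h t \<in> Circ n" "h t \<noteq> 0"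
  shows "\<exists>s. s \<in> {0..<t} \<and> h s = 0 \<and> (\<forall>u\<in>{s<..t}. h u \<noteq> 0 \<and> h u \<in> Circ n)"
proof -
  have ch: "continuous_on {0..1} h" and h0: "h 0 = 0" and sub: "path_image h \<subseteq> HE"
    using hl unfolding HE_loop_def path_def pathstart_def by auto
  have hin: "h u \<in> HE" if "u \<in> {0..1}" for u using sub that unfolding path_image_def by auto
  define K where "K = {0..t} \<inter> h -` {0}"
  have cK: "closed K" unfolding K_def
    by (rule continuous_closed_preimage) (use ch t in \<open>auto intro: continuous_on_subset\<close>)
  have K0: "0 \<in> K" using t h0 unfolding K_def by auto
  have bK: "bdd_above K" unfolding K_def by (auto intro: bdd_aboveI[of _ t])
  define s where "s = Sup K"
  have sK: "s \<in> K" unfolding s_def using closed_contains_Sup[OF _ bK cK] K0 by auto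
  then have s1: "s \<in> {0..t}" "h s = 0" unfolding K_def by auto
  then have st: "s < t" using t by (metis atLeastAtMost_iff order_le_less)
  have nz: "h u \<noteq> 0" if "u \<in> {s<..t}" for u
  proof
    assume "h u = 0"
    then have "u \<in> K" using that s1 unfolding K_def by auto
    then have "u \<le> s" unfolding s_def using bK by (rule cSup_upper)
    then show False using that by simp
  qed
  define I where "I = {s<..t}"
  have I01: "I \<subseteq> {0..1}" using s1 t unfolding I_def by auto
  have pos: "snd (h u) > 0" if "u \<in> I" for u
  proof -
    have "h u \<in> HE" using hin[of u] I01 that by blast
    then obtain m where "m \<ge> 1" "h u \<in> Circ m" using HE_E by blast
    then show ?thesis using circ_pos nz that unfolding I_def by blast
  qed
  have cI: "continuous_on I (qf \<circ> h)"
  proof (rule continuous_on_compose)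
    show "continuous_on I h" using ch I01 by (rule continuous_on_subset)
    show "continuous_on (h ` I) qf"
    proof (rule continuous_at_imp_continuous_on, intro ballI)
      fix y assume "y \<in> h ` I"
      then obtain u where "u \<in> I" "y = h u" by blast
      then have "snd y \<noteq> 0" using pos by force
      then show "isCont qf y" by (rule qf_cont)
    qed
  qed
  have conn: "connected ((qf \<circ> h) ` I)"
    by (rule connected_continuous_image[OF cI]) (simp add: I_def)
  have rng: "(qf \<circ> h) ` I \<subseteq> range (\<lambda>m::nat. 1 / real m)"
  proof
    fix y assume "y \<in> (qf \<circ> h) ` I"
    then obtain u where u: "u \<in> I" "y = qf (h u)" unfolding image_iff o_def by blast
    have "h u \<in> HE" using hin[of u] I01 u by blast
    then obtain m where m: "m \<ge> 1" "h u \<in> Circ m" using HE_E by blast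
    have "h u \<noteq> 0" using nz u unfolding I_def by blast
    then have "y = 1 / real m" using circ_q[OF m] u by simp
    then show "y \<in> range (\<lambda>m::nat. 1 / real m)" by blast
  qed
  have cnt: "countable ((qf \<circ> h) ` I)" by (rule countable_subset[OF rng]) simp
  have tI: "t \<in> I" using st unfolding I_def by simp
  have qt: "qf (h t) = 1 / real n" using circ_q n t by blast
  have "h u \<in> Circ n" if u: "u \<in> I" for u
  proof -
    have "qf (h u) = qf (h t)"
    proof (rule ccontr)
      assume "qf (h u) \<noteq> qf (h t)"
      then have "uncountable ((qf \<circ> h) ` I)"
        using connected_uncountable[OF conn, of "qf (h u)" "qf (h t)"] u tI by auto
      then show False using cnt by simp
    qed
    moreover have "h u \<in> HE" using hin[of u] I01 u by blast
    then obtain m where m: "m \<ge> 1" "h u \<in> Circ m" using HE_E by blast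
    moreover have "h u \<noteq> 0" using nz u unfolding I_def by blast
    ultimately have "1 / real m = 1 / real n" using circ_q[OF m] qt by simp
    then have "m = n" by simp
    then show ?thesis using m by simp
  qed
  then show ?thesis using s1 st nz unfolding I_def by auto
qed

lemma phi_lemma:
  assumes hl: "HE_loop h"
  shows "\<exists>\<phi> :: nat \<Rightarrow> real. inj_on \<phi> (Vset h) \<and> \<phi> ` Vset h \<subseteq> {t\<in>{0..1}. h t = 0}"
proof -
  define P where "P n s \<longleftrightarrow> (\<exists>t\<in>{0..1}. s \<in> {0..<t} \<and> h s = 0 \<and>
      (\<forall>u\<in>{s<..t}. h u \<noteq> 0 \<and> h u \<in> Circ n))" for n s
  have ex: "\<exists>s. P n s" if nV: "n \<in> Vset h" for n
  proof -
    obtain t where t: "t \<in> {0..1}" "h t \<in> Circ n" "h t \<noteq> 0" and n: "n \<ge> 1"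
      using nV unfolding Vset_def by blast
    show ?thesis using stay[OF hl n t] t(1) unfolding P_def by blast
  qed
  define \<phi> where "\<phi> n = (SOME s. P n s)" for n
  have Pphi: "P n (\<phi> n)" if "n \<in> Vset h" for n
    unfolding \<phi>_def using ex[OF that] by (rule someI_ex)
  have "inj_on \<phi> (Vset h)"
  proof (rule inj_onI)
    fix n n' assume nn: "n \<in> Vset h" "n' \<in> Vset h" "\<phi> n = \<phi> n'"
    obtain t where t: "t \<in> {0..1}" "\<phi> n \<in> {0..<t}" "\<forall>u\<in>{\<phi> n<..t}. h u \<noteq> 0 \<and> h u \<in> Circ n"
      using Pphi[OF nn(1)] unfolding P_def by blast
    obtain t' where t': "t' \<in> {0..1}" "\<phi> n' \<in> {0..<t'}" "\<forall>u\<in>{\<phi> n'<..t'}. h u \<noteq> 0 \<and> h u \<in> Circ n'"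
      using Pphi[OF nn(2)] unfolding P_def by blast
    define u where "u = min t t'"
    have u1: "u \<in> {\<phi> n<..t}" using t t' nn(3) unfolding u_def by auto
    have u2: "u \<in> {\<phi> n'<..t'}" using t t' nn(3) unfolding u_def by auto
    have "n \<ge> 1" using nn(1) unfolding Vset_def by blast
    then show "n = n'" using circ_unique'[of n "h u" n'] t(3) t'(3) u1 u2 by blast
  qed
  moreover have "\<phi> ` Vset h \<subseteq> {t\<in>{0..1}. h t = 0}"
  proof
    fix x assume "x \<in> \<phi> ` Vset h"
    then obtain n where n: "n \<in> Vset h" "x = \<phi> n" by blast
    then show "x \<in> {t\<in>{0..1}. h t = 0}" using Pphi[OF n(1)] unfolding P_def by auto
  qed
  ultimately show ?thesis by blast
qed

lemma linepath00: "linepath 0 0 = (\<lambda>t. 0)"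
  by (simp add: linepath_def fun_eq_iff)

lemma Aset_sub:
  assumes "HE_loop h"
  shows "Aset h \<subseteq> Vset h"
proof
  fix n assume n: "n \<in> Aset h"
  show "n \<in> Vset h"
  proof (rule ccontr)
    assume "n \<notin> Vset h"
    then have z: "\<forall>t\<in>{0..1}. h t \<in> Circ n \<longrightarrow> h t = 0" using n unfolding Vset_def Aset_def by blast
    have "homotopic_paths (Circ n) (linepath 0 0) (restr n h)"
    proof (rule homotopic_paths_eq)
      show "path (linepath (0::real\<times>real) 0)" by simp
      show "path_image (linepath (0::real\<times>real) 0) \<subseteq> Circ n" by simp
      fix t :: real assume "t \<in> {0..1}"
      then show "linepath 0 0 t = restr n h t" using z by (simp add: linepath00 restr_def)
    qed
    then show False using n unfolding Aset_def by (blast intro: homotopic_paths_sym)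
  qed
qed

lemma finite_V_omega:
  assumes "omega_loop k"
  shows "finite (Vset k)"
proof -
  have hl: "HE_loop k" using assms unfolding omega_loop_def by blast
  have fz: "finite {t\<in>{0..1}. k t = 0}" using assms unfolding omega_loop_def by simp
  obtain \<phi> :: "nat \<Rightarrow> real" where "inj_on \<phi> (Vset k)" "\<phi> ` Vset k \<subseteq> {t\<in>{0..1}. k t = 0}"
    using phi_lemma[OF hl] by blast
  then show ?thesis using fz finite_subset finite_imageD by blast
qed

lemma restr_join: "restr n (p +++ q) = restr n p +++ restr n q"
  by (auto simp: restr_def joinpaths_def fun_eq_iff)

lemma restr_rev: "restr n (reversepath p) = reversepath (restr n p)"
  by (auto simp: restr_def reversepath_def fun_eq_iff)

lemma Pomega_main: "f \<in> Pomega \<Longrightarrow> HE_loop f \<and> finite (Aset f)"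
proof (induction rule: Pomega.induct)
  case (gen k)
  then have "HE_loop k" unfolding omega_loop_def by blast
  then show ?case using Aset_sub finite_V_omega[OF gen] finite_subset by blast
next
  case unit
  have hl: "HE_loop (linepath 0 0)" unfolding HE_loop_def by simp
  have "Vset (linepath 0 0) = {}" unfolding Vset_def by (simp add: linepath00)
  then show ?case using hl Aset_sub[OF hl] by (metis subset_empty finite.emptyI)
next
  case (join p q)
  have hl: "HE_loop (p +++ q)" using join.IH unfolding HE_loop_def
    by (auto simp: path_image_join)
  have "Aset (p +++ q) \<subseteq> Aset p \<union> Aset q"
  proof
    fix n assume n: "n \<in> Aset (p +++ q)"
    show "n \<in> Aset p \<union> Aset q"
    proof (rule ccontr)
      assume "n \<notin> Aset p \<union> Aset q"
      then have hp: "homotopic_paths (Circ n) (restr n p) (linepath 0 0)"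
        and hq: "homotopic_paths (Circ n) (restr n q) (linepath 0 0)"
        using n unfolding Aset_def by auto
      have e: "pathfinish (restr n p) = pathstart (restr n q)"
        using join.IH unfolding HE_loop_def pathfinish_def pathstart_def restr_def by simp
      have "homotopic_paths (Circ n) (restr n p +++ restr n q) (linepath 0 0 +++ linepath 0 0)"
        by (rule homotopic_paths_join[OF hp hq e])
      moreover have "homotopic_paths (Circ n) (linepath 0 0 +++ linepath 0 0) (linepath (0::real\<times>real) 0)"
        by (rule homotopic_paths_lid') auto
      ultimately have "homotopic_paths (Circ n) (restr n (p +++ q)) (linepath 0 0)"
        unfolding restr_join by (rule homotopic_paths_trans)
      then show False using n unfolding Aset_def by blast
    qed
  qed
  then show ?case using hl join.IH by (simp add: finite_subset)
next
  case (rev p)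
  have hl: "HE_loop (reversepath p)" using rev.IH unfolding HE_loop_def by auto
  have "Aset (reversepath p) \<subseteq> Aset p"
  proof
    fix n assume n: "n \<in> Aset (reversepath p)"
    show "n \<in> Aset p"
    proof (rule ccontr)
      assume "n \<notin> Aset p"
      then have "homotopic_paths (Circ n) (restr n p) (linepath 0 0)"
        using n unfolding Aset_def by auto
      then have "homotopic_paths (Circ n) (reversepath (restr n p)) (reversepath (linepath 0 0))"
        by (rule homotopic_paths_reversepath_D)
      then have "homotopic_paths (Circ n) (restr n (reversepath p)) (linepath 0 0)"
        by (simp add: restr_rev)
      then show False using n unfolding Aset_def by blast
    qed
  qed
  then show ?case using hl rev.IH by (simp add: finite_subset)
next
  case (htpy p q)
  have hl: "HE_loop q" using htpy.IH htpy.hyps(2) unfolding HE_loop_def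
    by (metis homotopic_paths_imp_path homotopic_paths_imp_subset
        homotopic_paths_imp_pathstart homotopic_paths_imp_pathfinish)
  then show ?case using partI[OF htpy.hyps(2)] htpy.IH by simp
qed

theorem mainTheorem9:
  shows "(\<forall>f g. HE_loop f \<and> HE_loop g \<and> homotopic_paths HE f g \<longrightarrow> Aset f = Aset g)
       \<and> (\<forall>h. HE_loop h \<longrightarrow>
            (\<exists>\<phi> :: nat \<Rightarrow> real. inj_on \<phi> (Aset h) \<and> \<phi> ` Aset h \<subseteq> {t\<in>{0..1}. h t = 0}))
       \<and> (\<forall>f. HE_loop f \<and> f \<in> Pomega \<longrightarrow> finite (Aset f))"
proof (intro conjI allI impI)
  fix f g assume "HE_loop f \<and> HE_loop g \<and> homotopic_paths HE f g"
  then show "Aset f = Aset g" using partI by blast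
next
  fix h assume hl: "HE_loop h"
  obtain \<phi> :: "nat \<Rightarrow> real" where p: "inj_on \<phi> (Vset h)" "\<phi> ` Vset h \<subseteq> {t\<in>{0..1}. h t = 0}"
    using phi_lemma[OF hl] by blast
  have "inj_on \<phi> (Aset h)" using p(1) Aset_sub[OF hl] inj_on_subset by blast
  moreover have "\<phi> ` Aset h \<subseteq> {t\<in>{0..1}. h t = 0}" using p(2) Aset_sub[OF hl] by blast
  ultimately show "\<exists>\<phi> :: nat \<Rightarrow> real. inj_on \<phi> (Aset h) \<and> \<phi> ` Aset h \<subseteq> {t\<in>{0..1}. h t = 0}"
    by blast
next
  fix f assume "HE_loop f \<and> f \<in> Pomega"
  then show "finite (Aset f)" using Pomega_main by blast
qed

end
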